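(* Let $(\mathcal{A},\tau,\tau',t)$ be a real infinitesimal probability space in which both $\tau$ and $\tau'$ are tracial, i.e. $\tau(ab)=\tau(ba)$ and $\tau'(ab)=\tau'(ba)$ for all $a,b\in\mathcal{A}$. Let $\mathcal{A}_1,\dots,\mathcal{A}_s\subseteq\mathcal{A}$ be unital symmetric subalgebras which are free with respect to $\tau$. Then $\mathcal{A}_1,\dots,\mathcal{A}_s$ are real infinitesimally free if and only if, for every $n\ge 1$ and all centred, cyclically alternating $a_1,\dots,a_n\in\mathcal{A}_1\cup\dots\cup\mathcal{A}_s$, the following hold: (i) if $n=2$ or $n$ is odd, then $\tau'(a_1\cdots a_n)=0$; (ii) if $n=2k\ge 4$ is even, then $\tau'(a_1\cdots a_n)=\tau(a_1a_{k+1}^t)\,\tau(a_2a_{k+2}^t)\cdots\tau(a_ka_n^t)$.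
   Context: A real infinitesimal probability space $(\mathcal{A},\tau,\tau',t)$ consists of a unital complex algebra $\mathcal{A}$, an involution $t$ written $a\mapsto a^t$ (linear, with $(ab)^t=b^ta^t$ and $(a^t)^t=a$), a linear functional $\tau:\mathcal{A}\to\mathbb{C}$ with $\tau(1)=1$ and $\tau(a^t)=\tau(a)$ for all $a$, and a linear functional $\tau':\mathcal{A}\to\mathbb{C}$ with $\tau'(1)=0$. A subalgebra $\mathcal{B}$ is symmetric if $b^t\in\mathcal{B}$ whenever $b\in\mathcal{B}$. Elements $a_1,\dots,a_n$ with $a_i\in\mathcal{A}_{j_i}$ are centred if $\tau(a_i)=0$ for all $i$; they are alternating if $j_1\ne j_2,\dots,j_{n-1}\ne j_n$, and cyclically alternating if in addition $j_n\ne j_1$. Unital symmetric subalgebras $\mathcal{A}_1,\dots,\mathcal{A}_s$ are real infinitesimally free if, whenever $a_1,\dots,a_n$ with $a_i\in\mathcal{A}_{j_i}$ are centred and alternating, we have: (1) $\tau(a_1\cdots a_n)=0$; (2) if $n=2$, $\tau'(a_1a_2)=0$; (3) if $n=2k-1\ge 3$, $\tau'(a_1\cdots a_n)=\tau(a_1a_n)\tau'(a_2\cdots a_{n-1})+\tau(a_1a_k^ta_n)\tau(a_2a_{k+1}^t)\cdots\tau(a_{k-1}a_{n-1}^t)$; (4) if $n=2k\ge4$, $\tau'(a_1\cdots a_n)=\tau(a_1a_n)\tau'(a_2\cdots a_{n-1})+\tau(a_1a_{k+1}^t)\tau(a_2a_{k+2}^t)\cdots\tau(a_ka_n^t)$.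 *)

theory Defs
  imports Complex_Main
begin

definition complex_algebra :: "(complex \<Rightarrow> 'a::ring_1 \<Rightarrow> 'a) \<Rightarrow> bool" where
  "complex_algebra sc \<longleftrightarrow> module sc \<and>
     (\<forall>c a b. sc c (a * b) = sc c a * b \<and> sc c (a * b) = a * sc c b)"

definition real_inf_prob_space ::
  "(complex \<Rightarrow> 'a::ring_1 \<Rightarrow> 'a) \<Rightarrow> ('a \<Rightarrow> complex) \<Rightarrow> ('a \<Rightarrow> complex) \<Rightarrow> ('a \<Rightarrow> 'a) \<Rightarrow> bool" where
  "real_inf_prob_space sc \<tau> \<tau>' t \<longleftrightarrow>
     complex_algebra sc \<and>
     \<comment> \<open>t is a (linear, anti-multiplicative, involutive) involution\<close>
     (\<forall>a b. t (a + b) = t a + t b) \<and> (\<forall>c a. t (sc c a) = sc c (t a)) \<and>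
     (\<forall>a b. t (a * b) = t b * t a) \<and> (\<forall>a. t (t a) = a) \<and>
     \<comment> \<open>\<tau> linear, unital, t-invariant\<close>
     (\<forall>a b. \<tau> (a + b) = \<tau> a + \<tau> b) \<and> (\<forall>c a. \<tau> (sc c a) = c * \<tau> a) \<and>
     \<tau> 1 = 1 \<and> (\<forall>a. \<tau> (t a) = \<tau> a) \<and>
     \<comment> \<open>\<tau>' linear with \<tau>'(1) = 0\<close>
     (\<forall>a b. \<tau>' (a + b) = \<tau>' a + \<tau>' b) \<and> (\<forall>c a. \<tau>' (sc c a) = c * \<tau>' a) \<and>
     \<tau>' 1 = 0"

definition tracial :: "('a::ring_1 \<Rightarrow> complex) \<Rightarrow> bool" where
  "tracial \<phi> \<longleftrightarrow> (\<forall>a b. \<phi> (a * b) = \<phi> (b * a))"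

definition unital_symmetric_subalgebra ::
  "(complex \<Rightarrow> 'a::ring_1 \<Rightarrow> 'a) \<Rightarrow> ('a \<Rightarrow> 'a) \<Rightarrow> 'a set \<Rightarrow> bool" where
  "unital_symmetric_subalgebra sc t B \<longleftrightarrow>
     1 \<in> B \<and> (\<forall>a\<in>B. \<forall>b\<in>B. a + b \<in> B \<and> a * b \<in> B) \<and>
     (\<forall>c. \<forall>a\<in>B. sc c a \<in> B) \<and> (\<forall>b\<in>B. t b \<in> B)"

text \<open>Elements a_1..a_n are the list xs (xs ! (i-1) = a_i), with a_i in the
subalgebra A (js ! (i-1)), indices among 1..s.\<close>

definition centred_alternating ::
  "('a \<Rightarrow> complex) \<Rightarrow> (nat \<Rightarrow> 'a set) \<Rightarrow> nat \<Rightarrow> nat list \<Rightarrow> 'a list \<Rightarrow> bool" where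
  "centred_alternating \<tau> A s js xs \<longleftrightarrow>
     length js = length xs \<and>
     (\<forall>i < length xs. js ! i \<in> {1..s} \<and> xs ! i \<in> A (js ! i) \<and> \<tau> (xs ! i) = 0) \<and>
     (\<forall>i. Suc i < length xs \<longrightarrow> js ! i \<noteq> js ! Suc i)"

definition centred_cyclically_alternating ::
  "('a \<Rightarrow> complex) \<Rightarrow> (nat \<Rightarrow> 'a set) \<Rightarrow> nat \<Rightarrow> nat list \<Rightarrow> 'a list \<Rightarrow> bool" where
  "centred_cyclically_alternating \<tau> A s js xs \<longleftrightarrow>
     centred_alternating \<tau> A s js xs \<and> length xs \<ge> 1 \<and>
     js ! (length xs - 1) \<noteq> js ! 0"

definition free_wrt ::
  "('a::ring_1 \<Rightarrow> complex) \<Rightarrow> (nat \<Rightarrow> 'a set) \<Rightarrow> nat \<Rightarrow> bool" where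
  "free_wrt \<tau> A s \<longleftrightarrow>
     (\<forall>js xs. centred_alternating \<tau> A s js xs \<and> length xs \<ge> 1 \<longrightarrow>
        \<tau> (prod_list xs) = 0)"

definition real_inf_free ::
  "('a::ring_1 \<Rightarrow> complex) \<Rightarrow> ('a \<Rightarrow> complex) \<Rightarrow> ('a \<Rightarrow> 'a) \<Rightarrow> (nat \<Rightarrow> 'a set) \<Rightarrow> nat \<Rightarrow> bool" where
  "real_inf_free \<tau> \<tau>' t A s \<longleftrightarrow>
     (\<forall>js xs. centred_alternating \<tau> A s js xs \<and> length xs \<ge> 1 \<longrightarrow>
        (let n = length xs in
          \<tau> (prod_list xs) = 0 \<and>
          (n = 2 \<longrightarrow> \<tau>' (prod_list xs) = 0) \<and>
          (odd n \<and> n \<ge> 3 \<longrightarrow>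
             (let k = (n + 1) div 2 in
               \<tau>' (prod_list xs) =
                 \<tau> (xs ! 0 * xs ! (n - 1)) * \<tau>' (prod_list (take (n - 2) (drop 1 xs)))
                 + \<tau> (xs ! 0 * t (xs ! (k - 1)) * xs ! (n - 1)) *
                   (\<Prod>i\<in>{1..k - 2}. \<tau> (xs ! i * t (xs ! (i + k - 1)))))) \<and>
          (even n \<and> n \<ge> 4 \<longrightarrow>
             (let k = n div 2 in
               \<tau>' (prod_list xs) =
                 \<tau> (xs ! 0 * xs ! (n - 1)) * \<tau>' (prod_list (take (n - 2) (drop 1 xs)))
                 + (\<Prod>i<k. \<tau> (xs ! i * t (xs ! (i + k))))))))"

end

theory Submission
  imports Defs
begin

locale ctx =
  fixes sc :: "complex \<Rightarrow> 'a::ring_1 \<Rightarrow> 'a"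
    and \<tau> \<tau>' :: "'a \<Rightarrow> complex" and t :: "'a \<Rightarrow> 'a"
    and A :: "nat \<Rightarrow> 'a set" and s :: nat
  assumes rips: "real_inf_prob_space sc \<tau> \<tau>' t"
    and tr: "tracial \<tau>" and tr': "tracial \<tau>'"
    and sub: "\<And>j. j \<in> {1..s} \<Longrightarrow> unital_symmetric_subalgebra sc t (A j)"
    and fr: "free_wrt \<tau> A s"
begin

lemma mod: "module sc" using rips by (simp add: real_inf_prob_space_def complex_algebra_def)
lemma sc_mul: "sc c x = sc c 1 * x" using rips
  by (simp add: real_inf_prob_space_def complex_algebra_def) (metis mult_1)
lemma tau_add: "\<tau> (a + b) = \<tau> a + \<tau> b" using rips by (simp add: real_inf_prob_space_def)
lemma tau'_add: "\<tau>' (a + b) = \<tau>' a + \<tau>' b" using rips by (simp add: real_inf_prob_space_def)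
lemma tau_sc: "\<tau> (sc c a) = c * \<tau> a" using rips by (simp add: real_inf_prob_space_def)
lemma tau'_sc: "\<tau>' (sc c a) = c * \<tau>' a" using rips by (simp add: real_inf_prob_space_def)
lemma tau1: "\<tau> 1 = 1" using rips by (simp add: real_inf_prob_space_def)
lemma tau_t: "\<tau> (t a) = \<tau> a" using rips by (simp add: real_inf_prob_space_def)
lemma trace: "\<tau> (a * b) = \<tau> (b * a)" using tr by (simp add: tracial_def)
lemma trace': "\<tau>' (a * b) = \<tau>' (b * a)" using tr' by (simp add: tracial_def)

lemma tau_0: "\<tau> 0 = 0" using tau_add[of 0 0] by simp
lemma tau_diff: "\<tau> (a - b) = \<tau> a - \<tau> b"
  using tau_add[of "a - b" b] by (simp add: algebra_simps)
lemma tau'_diff: "\<tau>' (a - b) = \<tau>' a - \<tau>' b"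
  using tau'_add[of "a - b" b] by (simp add: algebra_simps)

lemma sub_mem:
  assumes "j \<in> {1..s}" "x \<in> A j" "y \<in> A j"
  shows "x * y \<in> A j" "x + y \<in> A j" "sc c x \<in> A j" "t x \<in> A j" "1 \<in> A j"
  using sub[OF assms(1)] assms(2,3) by (auto simp: unital_symmetric_subalgebra_def)

lemma sub_diff:
  assumes "j \<in> {1..s}" "x \<in> A j" "y \<in> A j"
  shows "x - y \<in> A j"
proof -
  have "sc (-1) y = - sc 1 y" by (rule module.scale_minus_left[OF mod])
  also have "sc 1 y = y" by (rule module.scale_one[OF mod])
  finally have e: "sc (-1) y = - y" .
  have "sc (-1) y \<in> A j" by (rule sub_mem(3)[OF assms(1,3,3)])
  then have "- y \<in> A j" by (simp only: e)
  from sub_mem(2)[OF assms(1,2) this] show ?thesis by (simp only: diff_conv_add_uminus)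
qed

definition cen where "cen x = x - sc (\<tau> x) 1"

lemma cen_mem: "j \<in> {1..s} \<Longrightarrow> x \<in> A j \<Longrightarrow> cen x \<in> A j"
proof -
  assume a: "j \<in> {1..s}" and b: "x \<in> A j"
  have "sc (\<tau> x) 1 \<in> A j" using sub_mem(3)[OF a sub_mem(5)[OF a b b] b] .
  then show ?thesis unfolding cen_def using sub_diff[OF a b] by blast
qed

lemma cen_tau: "\<tau> (cen x) = 0"
  by (simp add: cen_def tau_diff tau_sc tau1)

lemma cen_mult: "x * y = cen x * y + sc (\<tau> x) y"
  by (simp add: cen_def algebra_simps sc_mul[of _ y])

lemma tau_cen_mult: "\<tau> (cen x * y) = \<tau> (x * y) - \<tau> x * \<tau> y"
  using cen_mult[of x y] tau_add tau_sc by (simp add: algebra_simps)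

lemma tau'_cen_mult: "\<tau>' (x * y) = \<tau>' (cen x * y) + \<tau> x * \<tau>' y"
  using cen_mult[of x y] tau'_add tau'_sc by simp

lemma free2:
  assumes "i \<in> {1..s}" "j \<in> {1..s}" "i \<noteq> j" "x \<in> A i" "y \<in> A j" "\<tau> y = 0"
  shows "\<tau> (x * y) = 0" "\<tau> (y * x) = 0"
proof -
  have "centred_alternating \<tau> A s [i, j] [cen x, y]"
    using assms cen_mem cen_tau unfolding centred_alternating_def
    by (auto simp: less_Suc_eq nth_Cons split: nat.splits)
  then have "\<tau> (prod_list [cen x, y]) = 0" using fr unfolding free_wrt_def by force
  then show "\<tau> (x * y) = 0" using tau_cen_mult[of x y] assms(6) by simp
  then show "\<tau> (y * x) = 0" using trace by metis
qed


lemma free3: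
  assumes "i \<in> {1..s}" "j \<in> {1..s}" "k \<in> {1..s}" "i \<noteq> k"
    "x \<in> A i" "c \<in> A j" "z \<in> A k" "\<tau> x = 0" "\<tau> c = 0" "\<tau> z = 0"
  shows "\<tau> (x * c * z) = 0"
proof (cases "j = i")
  case True
  then show ?thesis using free2(1)[of i k "x * c" z] assms sub_mem(1) by auto
next
  case False
  note F = False
  show ?thesis
  proof (cases "j = k")
    case True
    have "\<tau> (c * z * x) = 0" using free2(1)[of k i "c * z" x] assms sub_mem(1) True by auto
    then show ?thesis using trace[of x "c * z"] by (simp add: mult.assoc)
  next
    case False
    have "centred_alternating \<tau> A s [i, j, k] [x, c, z]"
      using assms F False unfolding centred_alternating_def
      by (auto simp: less_Suc_eq nth_Cons split: nat.splits)
    then have "\<tau> (prod_list [x, c, z]) = 0" using fr unfolding free_wrt_def by force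
    then show ?thesis by (simp add: mult.assoc)
  qed
qed

lemma alt_facts:
  assumes "centred_alternating \<tau> A s js xs" "i < length xs"
  shows "js ! i \<in> {1..s}" "xs ! i \<in> A (js ! i)" "\<tau> (xs ! i) = 0"
    "t (xs ! i) \<in> A (js ! i)" "\<tau> (t (xs ! i)) = 0"
  using assms sub_mem(4) tau_t unfolding centred_alternating_def by auto

lemma cyc_rhs:
  assumes "centred_cyclically_alternating \<tau> A s js xs"
  shows "\<tau> (xs ! 0 * xs ! (length xs - 1)) = 0"
    "odd (length xs) \<Longrightarrow> \<tau> (xs ! 0 * t (xs ! ((length xs + 1) div 2 - 1)) * xs ! (length xs - 1)) = 0"
proof -
  have al: "centred_alternating \<tau> A s js xs" and n1: "length xs \<ge> 1"
    and ne: "js ! (length xs - 1) \<noteq> js ! 0"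
    using assms unfolding centred_cyclically_alternating_def by auto
  note F = alt_facts[OF al]
  show "\<tau> (xs ! 0 * xs ! (length xs - 1)) = 0"
    using free2(1)[OF F(1) F(1) _ F(2) F(2) F(3), of 0 "length xs - 1"] ne n1 by (auto simp: Suc_le_eq)
  assume "odd (length xs)"
  show "\<tau> (xs ! 0 * t (xs ! ((length xs + 1) div 2 - 1)) * xs ! (length xs - 1)) = 0"
    apply (rule free3[of "js ! 0" "js ! ((length xs + 1) div 2 - 1)" "js ! (length xs - 1)"])
    using ne n1 F by (auto simp: Suc_le_eq)
qed

lemma split3: "length xs \<ge> 2 \<Longrightarrow> \<exists>a0 mid al. xs = a0 # mid @ [al]"
proof (cases xs)
  case (Cons a r)
  assume "length xs \<ge> 2"
  then have "r \<noteq> []" using Cons by auto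
  then have "r = butlast r @ [last r]" by simp
  then show ?thesis using Cons by blast
qed simp

definition cycP where
  "cycP js xs \<longleftrightarrow> (let n = length xs in
         ((n = 2 \<or> odd n) \<longrightarrow> \<tau>' (prod_list xs) = 0) \<and>
         (even n \<and> n \<ge> 4 \<longrightarrow>
            \<tau>' (prod_list xs) = (\<Prod>i < n div 2. \<tau> (xs ! i * t (xs ! (i + n div 2))))))"

lemma rot:
  assumes H: "\<And>js xs. centred_cyclically_alternating \<tau> A s js xs \<Longrightarrow> cycP js xs"
    and al: "centred_alternating \<tau> A s js xs" and n3: "length xs \<ge> 3"
    and eq: "js ! (length xs - 1) = js ! 0"
  shows "(odd (length xs) \<longrightarrow> \<tau>' (prod_list xs) =
                 \<tau> (xs ! 0 * xs ! (length xs - 1)) * \<tau>' (prod_list (take (length xs - 2) (drop 1 xs)))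
                 + \<tau> (xs ! 0 * t (xs ! ((length xs + 1) div 2 - 1)) * xs ! (length xs - 1)) *
                   (\<Prod>i\<in>{1..(length xs + 1) div 2 - 2}. \<tau> (xs ! i * t (xs ! (i + (length xs + 1) div 2 - 1)))))
    \<and> (even (length xs) \<longrightarrow> \<tau>' (prod_list xs) =
                 \<tau> (xs ! 0 * xs ! (length xs - 1)) * \<tau>' (prod_list (take (length xs - 2) (drop 1 xs)))
                 + (\<Prod>i<length xs div 2. \<tau> (xs ! i * t (xs ! (i + length xs div 2)))))"
proof -
  define n where "n = length xs"
  have ljs: "length js = n" using al unfolding centred_alternating_def n_def by simp
  note F = alt_facts[OF al]
  have alt: "\<And>i. Suc i < n \<Longrightarrow> js ! i \<noteq> js ! Suc i"
    using al unfolding centred_alternating_def n_def by simp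
  have "length xs \<ge> 2" "length js \<ge> 2" using n3 ljs n_def by auto
  then have "\<exists>a0 mid al. xs = a0 # mid @ [al]" "\<exists>a0 mid al. js = a0 # mid @ [al]"
    using split3 by blast+
  then obtain a0 mid al' j0 jm jl where xs: "xs = a0 # mid @ [al']" and js: "js = j0 # jm @ [jl]"
    by blast
  have lmid: "length mid = n - 2" and ljm: "length jm = n - 2"
    using xs js ljs n_def by auto
  have jl: "jl = j0" using eq js xs ljm lmid
    by (simp add: nth_append)
  have a0: "xs ! 0 = a0" and alx: "xs ! (n - 1) = al'" using xs n_def by (auto simp: nth_append)
  have mideq: "take (n - 2) (drop 1 xs) = mid" using xs lmid by simp
  have j0s: "j0 \<in> {1..s}" and a0A: "a0 \<in> A j0" and ta0: "\<tau> a0 = 0"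
    using F[of 0] xs js n3 by auto
  have alA: "al' \<in> A j0" and tal: "\<tau> al' = 0"
  proof -
    have "n - 1 = Suc (length jm)" using ljm n3 n_def by simp
    then have jn: "js ! (n - 1) = j0" using js jl by (simp add: nth_append)
    show "al' \<in> A j0" "\<tau> al' = 0" using F[of "n - 1"] alx n3 n_def jn by auto
  qed
  define b where "b = al' * a0"
  have bA: "b \<in> A j0" using b_def sub_mem(1)[OF j0s alA a0A] by simp
  define P where "P = prod_list mid"
  have step1: "\<tau>' (prod_list xs) = \<tau>' (cen b * P) + \<tau> (xs ! 0 * xs ! (n - 1)) * \<tau>' P"
  proof -
    have "\<tau>' (prod_list xs) = \<tau>' ((a0 * P) * al')" using xs P_def by (simp add: mult.assoc)
    also have "\<dots> = \<tau>' (b * P)" using trace'[of "a0 * P" al'] b_def by (simp add: mult.assoc)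
    also have "\<dots> = \<tau>' (cen b * P) + \<tau> b * \<tau>' P" by (rule tau'_cen_mult)
    also have "\<tau> b = \<tau> (xs ! 0 * xs ! (n - 1))" using a0 alx b_def trace by metis
    finally show ?thesis .
  qed
  define ys where "ys = cen b # mid"
  define js' where "js' = j0 # jm"
  have lys: "length ys = n - 1" and ljs': "length js' = n - 1"
    using ys_def js'_def lmid ljm n3 n_def by auto
  have ysi: "\<And>i. 0 < i \<Longrightarrow> i < n - 1 \<Longrightarrow> ys ! i = xs ! i \<and> js' ! i = js ! i"
    using xs js ys_def js'_def lmid ljm by (auto simp: nth_append nth_Cons split: nat.splits)
  have ys0: "ys ! 0 = cen b" "js' ! 0 = j0" using ys_def js'_def by auto
  have c1: "\<forall>i < length ys. js' ! i \<in> {1..s} \<and> ys ! i \<in> A (js' ! i) \<and> \<tau> (ys ! i) = 0"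
  proof (intro allI impI)
    fix i assume i: "i < length ys"
    show "js' ! i \<in> {1..s} \<and> ys ! i \<in> A (js' ! i) \<and> \<tau> (ys ! i) = 0"
    proof (cases "i = 0")
      case True then show ?thesis using ys0 j0s cen_mem[OF j0s bA] cen_tau by simp
    next
      case False then show ?thesis using ysi[of i] i lys F[of i] n_def by auto
    qed
  qed
  have c2: "\<forall>i. Suc i < length ys \<longrightarrow> js' ! i \<noteq> js' ! Suc i"
  proof (intro allI impI)
    fix i assume i: "Suc i < length ys"
    show "js' ! i \<noteq> js' ! Suc i"
    proof (cases "i = 0")
      case True then show ?thesis using ys0 ysi[of 1] i lys alt[of 0] js by auto
    next
      case False then show ?thesis using ysi[of i] ysi[of "Suc i"] i lys alt[of i] by auto
    qed
  qed
  have c3: "js' ! (length ys - 1) \<noteq> js' ! 0"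
  proof -
    have e: "length ys - 1 = n - 2" using lys by simp
    have "0 < n - 2" "n - 2 < n - 1" using n3 n_def by auto
    then have "js' ! (n - 2) = js ! (n - 2)" using ysi by blast
    then have "js' ! (length ys - 1) = js ! (n - 2)" using e by simp
    moreover have "js ! (n - 2) \<noteq> js ! (n - 1)"
    proof -
      have "Suc (n - 2) = n - 1" "Suc (n - 2) < n" using n3 n_def by auto
      then show ?thesis using alt[of "n - 2"] by simp
    qed
    moreover have "js ! (n - 1) = j0" using eq js n_def by simp
    ultimately show ?thesis using ys0 by simp
  qed
  have cyc: "centred_cyclically_alternating \<tau> A s js' ys"
    unfolding centred_cyclically_alternating_def centred_alternating_def
    using c1 c2 c3 lys ljs' n3 n_def by auto
  have Hy: "cycP js' ys" by (rule H[OF cyc])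
  have pys: "prod_list ys = cen b * P" using ys_def P_def by simp
  have ODD: "\<tau>' (prod_list xs) =
                 \<tau> (xs ! 0 * xs ! (n - 1)) * \<tau>' (prod_list (take (n - 2) (drop 1 xs)))
                 + \<tau> (xs ! 0 * t (xs ! ((n + 1) div 2 - 1)) * xs ! (n - 1)) *
                   (\<Prod>i\<in>{1..(n + 1) div 2 - 2}. \<tau> (xs ! i * t (xs ! (i + (n + 1) div 2 - 1))))"
    if odd: "odd n"
  proof -
    define k where "k = (n + 1) div 2"
    have k2: "k \<ge> 2" using k_def n3 n_def by simp
    have kk: "length ys div 2 = k - 1" using lys k_def odd n3 n_def by (auto elim!: oddE)
    have kn: "k - 1 < n - 1" "2 * k = n + 1" using k_def odd n3 n_def by (auto elim!: oddE)
    have c: "\<tau> (cen b * t (ys ! (k - 1))) = \<tau> (xs ! 0 * t (xs ! (k - 1)) * xs ! (n - 1))"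
    proof -
      have e: "ys ! (k - 1) = xs ! (k - 1)" using ysi[of "k - 1"] k2 kn by auto
      have "\<tau> (cen b * t (ys ! (k - 1))) = \<tau> (b * t (xs ! (k - 1)))"
        using tau_cen_mult e F(5)[of "k - 1"] kn n_def by simp
      also have "\<dots> = \<tau> (a0 * t (xs ! (k - 1)) * al')"
        using b_def trace[of al' "a0 * t (xs ! (k - 1))"] by (simp add: mult.assoc)
      finally show ?thesis using a0 alx by simp
    qed
    show ?thesis
    proof (cases "n = 3")
      case True
      then have "\<tau>' (cen b * P) = 0" using Hy pys lys unfolding cycP_def by (simp add: Let_def)
      moreover have "\<tau> (cen b * t (ys ! (k - 1))) = 0"
        using True k_def ysi[of 1] free2(1)[OF j0s _ _ cen_mem[OF j0s bA], of "js ! 1" "t (xs ! 1)"]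
          F[of 1] alt[of 0] js n_def by auto
      ultimately show ?thesis using step1 c True k_def mideq P_def by simp
    next
      case False
      then have n5: "n \<ge> 5" using odd n3 n_def by (auto elim!: oddE)
      then have k3: "k \<ge> 3" using k_def by simp
      have "\<tau>' (cen b * P) = (\<Prod>i<k - 1. \<tau> (ys ! i * t (ys ! (i + (k - 1)))))"
        using Hy pys lys odd n5 kk unfolding cycP_def by (simp add: Let_def)
      also have "\<dots> = \<tau> (cen b * t (ys ! (k - 1))) * (\<Prod>i<k - 2. \<tau> (ys ! Suc i * t (ys ! (Suc i + (k - 1)))))"
        using prod.lessThan_Suc_shift[of "\<lambda>i. \<tau> (ys ! i * t (ys ! (i + (k - 1))))" "k - 2"] k3 ys0
        by (simp add: Suc_diff_Suc numeral_2_eq_2)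
      also have "(\<Prod>i<k - 2. \<tau> (ys ! Suc i * t (ys ! (Suc i + (k - 1))))) =
          (\<Prod>i<k - 2. \<tau> (xs ! Suc i * t (xs ! (Suc i + k - 1))))"
      proof (rule prod.cong[OF refl])
        fix i assume "i \<in> {..<k - 2}"
        then have "Suc i < n - 1" "Suc i + (k - 1) < n - 1" using kn by auto
        then show "\<tau> (ys ! Suc i * t (ys ! (Suc i + (k - 1)))) = \<tau> (xs ! Suc i * t (xs ! (Suc i + k - 1)))"
          using ysi[of "Suc i"] ysi[of "Suc i + (k - 1)"] k3 by simp
      qed
      also have "\<dots> = (\<Prod>i\<in>{1..k - 2}. \<tau> (xs ! i * t (xs ! (i + k - 1))))"
        using prod.atLeast1_atMost_eq[of "\<lambda>i. \<tau> (xs ! i * t (xs ! (i + k - 1)))" "k - 2"] by simp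
      finally show ?thesis using step1 c k_def mideq P_def by simp
    qed
  qed
  have EVEN: "\<tau>' (prod_list xs) =
                 \<tau> (xs ! 0 * xs ! (n - 1)) * \<tau>' (prod_list (take (n - 2) (drop 1 xs)))
                 + (\<Prod>i<n div 2. \<tau> (xs ! i * t (xs ! (i + n div 2))))"
    if ev: "even n"
  proof -
    define k where "k = n div 2"
    have kn: "2 * k = n" "k \<ge> 2" using k_def ev n3 n_def by (auto elim!: evenE)
    have xne: "xs \<noteq> []" using n3 by auto
    then have "\<tau>' (cen b * P) = 0" using Hy pys lys ev n3 n_def unfolding cycP_def by (simp add: Let_def)
    moreover have "(\<Prod>i<k. \<tau> (xs ! i * t (xs ! (i + k)))) = 0"
    proof (cases "js ! 0 = js ! k")
      case False
      have "\<tau> (xs ! 0 * t (xs ! (0 + k))) = 0"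
        apply (rule free2(1)[of "js ! 0" "js ! k"])
        using F[of 0] F[of k] False kn n_def xne by auto
      moreover have "0 \<in> {..<k}" using kn by simp
      ultimately show ?thesis by (metis (no_types, lifting) finite_lessThan prod_zero add_0)
    next
      case True
      have ne: "js ! (k - 1) \<noteq> js ! (n - 1)"
        using alt[of "k - 1"] kn True eq n_def by simp
      have idx: "k - 1 + k = n - 1" using kn by simp
      have "\<tau> (xs ! (k - 1) * t (xs ! (n - 1))) = 0"
        apply (rule free2(1)[of "js ! (k - 1)" "js ! (n - 1)"])
        using F[of "k - 1"] F[of "n - 1"] ne kn n_def by auto
      then have "\<tau> (xs ! (k - 1) * t (xs ! (k - 1 + k))) = 0" by (simp only: idx)
      moreover have "k - 1 \<in> {..<k}" using kn by simp
      ultimately show ?thesis by (metis (no_types, lifting) finite_lessThan prod_zero)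
    qed
    ultimately show ?thesis using step1 k_def mideq P_def by simp
  qed
  show ?thesis unfolding n_def[symmetric] using ODD EVEN by blast
qed

definition rifP where "rifP xs \<longleftrightarrow> (let n = length xs in
          \<tau> (prod_list xs) = 0 \<and>
          (n = 2 \<longrightarrow> \<tau>' (prod_list xs) = 0) \<and>
          (odd n \<and> n \<ge> 3 \<longrightarrow>
             (let k = (n + 1) div 2 in
               \<tau>' (prod_list xs) =
                 \<tau> (xs ! 0 * xs ! (n - 1)) * \<tau>' (prod_list (take (n - 2) (drop 1 xs)))
                 + \<tau> (xs ! 0 * t (xs ! (k - 1)) * xs ! (n - 1)) *
                   (\<Prod>i\<in>{1..k - 2}. \<tau> (xs ! i * t (xs ! (i + k - 1)))))) \<and>
          (even n \<and> n \<ge> 4 \<longrightarrow>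
             (let k = n div 2 in
               \<tau>' (prod_list xs) =
                 \<tau> (xs ! 0 * xs ! (n - 1)) * \<tau>' (prod_list (take (n - 2) (drop 1 xs)))
                 + (\<Prod>i<k. \<tau> (xs ! i * t (xs ! (i + k)))))))"

lemma rif_eq: "real_inf_free \<tau> \<tau>' t A s \<longleftrightarrow> (\<forall>js xs. centred_alternating \<tau> A s js xs \<and> length xs \<ge> 1 \<longrightarrow> rifP xs)"
  unfolding real_inf_free_def rifP_def ..

lemma main: "real_inf_free \<tau> \<tau>' t A s \<longleftrightarrow>
    (\<forall>js xs. centred_cyclically_alternating \<tau> A s js xs \<longrightarrow> cycP js xs)"
proof
  assume R: "real_inf_free \<tau> \<tau>' t A s"
  show "\<forall>js xs. centred_cyclically_alternating \<tau> A s js xs \<longrightarrow> cycP js xs"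
  proof (intro allI impI)
    fix js xs assume C: "centred_cyclically_alternating \<tau> A s js xs"
    have al: "centred_alternating \<tau> A s js xs" and n1: "length xs \<ge> 1"
      and ne: "js ! (length xs - 1) \<noteq> js ! 0"
      using C unfolding centred_cyclically_alternating_def by auto
    have n2: "length xs \<ge> 2" using n1 ne by (cases "length xs = 1") auto
    have R': "let n = length xs in
          \<tau> (prod_list xs) = 0 \<and>
          (n = 2 \<longrightarrow> \<tau>' (prod_list xs) = 0) \<and>
          (odd n \<and> n \<ge> 3 \<longrightarrow>
             (let k = (n + 1) div 2 in
               \<tau>' (prod_list xs) =
                 \<tau> (xs ! 0 * xs ! (n - 1)) * \<tau>' (prod_list (take (n - 2) (drop 1 xs)))
                 + \<tau> (xs ! 0 * t (xs ! (k - 1)) * xs ! (n - 1)) *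
                   (\<Prod>i\<in>{1..k - 2}. \<tau> (xs ! i * t (xs ! (i + k - 1)))))) \<and>
          (even n \<and> n \<ge> 4 \<longrightarrow>
             (let k = n div 2 in
               \<tau>' (prod_list xs) =
                 \<tau> (xs ! 0 * xs ! (n - 1)) * \<tau>' (prod_list (take (n - 2) (drop 1 xs)))
                 + (\<Prod>i<k. \<tau> (xs ! i * t (xs ! (i + k))))))"
      using R al n1 unfolding real_inf_free_def by blast
    have z1: "\<tau> (xs ! 0 * xs ! (length xs - 1)) = 0" by (rule cyc_rhs(1)[OF C])
    have z2: "odd (length xs) \<Longrightarrow> \<tau> (xs ! 0 * t (xs ! ((length xs + 1) div 2 - 1)) * xs ! (length xs - 1)) = 0"
      by (rule cyc_rhs(2)[OF C])
    show "cycP js xs"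
    proof (cases "even (length xs)")
      case True
      then show ?thesis using R' z1 n2 unfolding cycP_def Let_def by auto
    next
      case False
      then have "length xs \<ge> 3" using n2 by (cases "length xs = 2") auto
      then show ?thesis using R' z1 z2 False unfolding cycP_def Let_def by auto
    qed
  qed
next
  assume H: "\<forall>js xs. centred_cyclically_alternating \<tau> A s js xs \<longrightarrow> cycP js xs"
  show "real_inf_free \<tau> \<tau>' t A s"
    unfolding rif_eq
  proof (intro allI impI)
    fix js xs assume a: "centred_alternating \<tau> A s js xs \<and> length xs \<ge> 1"
    then have al: "centred_alternating \<tau> A s js xs" and n1: "length xs \<ge> 1" by auto
    have t0: "\<tau> (prod_list xs) = 0" using fr a unfolding free_wrt_def by blast
    have H': "\<And>js xs. centred_cyclically_alternating \<tau> A s js xs \<Longrightarrow> cycP js xs"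
      using H by blast
    have rot': "rifP xs" if n3: "length xs \<ge> 3" and eq: "js ! (length xs - 1) = js ! 0"
    proof -
      note r = rot[OF H' al n3 eq]
      show ?thesis using r t0 n3 unfolding rifP_def Let_def by auto
    qed
    have cyc': "rifP xs" if n2: "length xs \<ge> 2" and ne: "js ! (length xs - 1) \<noteq> js ! 0"
    proof -
      have C: "centred_cyclically_alternating \<tau> A s js xs"
        unfolding centred_cyclically_alternating_def using al n1 ne by blast
      have P: "cycP js xs" by (rule H'[OF C])
      have z1: "\<tau> (xs ! 0 * xs ! (length xs - 1)) = 0" by (rule cyc_rhs(1)[OF C])
      have z2: "odd (length xs) \<Longrightarrow> \<tau> (xs ! 0 * t (xs ! ((length xs + 1) div 2 - 1)) * xs ! (length xs - 1)) = 0"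
        by (rule cyc_rhs(2)[OF C])
      show ?thesis using P z1 z2 t0 unfolding rifP_def cycP_def Let_def by auto
    qed
    show "rifP xs"
    proof (cases "length xs = 1")
      case True
      then show ?thesis using t0 unfolding rifP_def Let_def by simp
    next
      case False
      then have n2: "length xs \<ge> 2" using n1 by simp
      show ?thesis
      proof (cases "js ! (length xs - 1) = js ! 0")
        case True
        have "length xs \<noteq> 2"
        proof
          assume "length xs = 2"
          then show False using True al unfolding centred_alternating_def by auto
        qed
        then show ?thesis using rot' True n2 by simp
      next
        case False
        then show ?thesis using cyc' n2 by simp
      qed
    qed
  qed
qed

end

theorem proposition3p4:
  fixes sc :: "complex \<Rightarrow> 'a::ring_1 \<Rightarrow> 'a"
    and \<tau> \<tau>' :: "'a \<Rightarrow> complex" and t :: "'a \<Rightarrow> 'a"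
    and A :: "nat \<Rightarrow> 'a set" and s :: nat
  assumes "real_inf_prob_space sc \<tau> \<tau>' t"
    and "tracial \<tau>" and "tracial \<tau>'"
    and "\<And>j. j \<in> {1..s} \<Longrightarrow> unital_symmetric_subalgebra sc t (A j)"
    and "free_wrt \<tau> A s"
  shows "real_inf_free \<tau> \<tau>' t A s \<longleftrightarrow>
    (\<forall>js xs. centred_cyclically_alternating \<tau> A s js xs \<longrightarrow>
       (let n = length xs in
         ((n = 2 \<or> odd n) \<longrightarrow> \<tau>' (prod_list xs) = 0) \<and>
         (even n \<and> n \<ge> 4 \<longrightarrow>
            \<tau>' (prod_list xs) = (\<Prod>i < n div 2. \<tau> (xs ! i * t (xs ! (i + n div 2)))))))"
proof -
  interpret ctx sc \<tau> \<tau>' t A s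
    using assms by unfold_locales auto
  show ?thesis using main unfolding cycP_def .
qed

end
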